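(* Let $\Gamma:=\mathrm{Cos}(G,H,A)$ be a vertex-transitive graph and let $B$ be a subset of $A$. If every $\varphi\in\mathrm{Aut}(\Gamma)_H$ fixes the set $\{Hx\mid x\in B\}$ setwise, then every $\varphi\in\mathrm{Aut}(\Gamma)_H$ fixes the set $\{Hx\mid x\in\langle B\rangle\}$ setwise.
   Context: $G$ is a finite group, $H\le G$, and $A\subseteq G$ is a union of $(H,H)$-double cosets with $A=A^{-1}$. The coset graph $\mathrm{Cos}(G,H,A)$ has vertex set the right cosets of $H$ in $G$, with $Hx$ adjacent to $Hy$ iff $yx^{-1}\in A$ (i.e. $Hyx^{-1}H\subseteq HAH$). $\mathrm{Aut}(\Gamma)_H$ denotes the stabilizer in $\mathrm{Aut}(\Gamma)$ of the vertex $H$. *)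

theory Defs
  imports "HOL-Algebra.Algebra"
begin

text \<open>Vertices of Cos(G,H,A): the right cosets H x of H in G.
  Adjacency: Hx ~ Hy iff y x^{-1} in A.\<close>

definition cos_adj :: "('a, 'b) monoid_scheme \<Rightarrow> 'a set \<Rightarrow> 'a set \<Rightarrow> 'a set \<Rightarrow> 'a set \<Rightarrow> bool" where
  "cos_adj G H A V1 V2 \<longleftrightarrow>
     (\<exists>x\<in>carrier G. \<exists>y\<in>carrier G. V1 = r_coset G H x \<and> V2 = r_coset G H y \<and> monoid.mult G y (m_inv G x) \<in> A)"

definition cos_aut :: "('a, 'b) monoid_scheme \<Rightarrow> 'a set \<Rightarrow> 'a set \<Rightarrow> ('a set \<Rightarrow> 'a set) set" where
  "cos_aut G H A = {\<phi>. bij_betw \<phi> (RCOSETS G H) (RCOSETS G H) \<and>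
     (\<forall>V1\<in>RCOSETS G H. \<forall>V2\<in>RCOSETS G H. cos_adj G H A V1 V2 \<longleftrightarrow> cos_adj G H A (\<phi> V1) (\<phi> V2))}"

definition cos_aut_stab :: "('a, 'b) monoid_scheme \<Rightarrow> 'a set \<Rightarrow> 'a set \<Rightarrow> ('a set \<Rightarrow> 'a set) set" where
  "cos_aut_stab G H A = {\<phi> \<in> cos_aut G H A. \<phi> H = H}"

definition cos_vertex_transitive :: "('a, 'b) monoid_scheme \<Rightarrow> 'a set \<Rightarrow> 'a set \<Rightarrow> bool" where
  "cos_vertex_transitive G H A \<longleftrightarrow>
     (\<forall>V1\<in>RCOSETS G H. \<forall>V2\<in>RCOSETS G H. \<exists>\<phi>\<in>cos_aut G H A. \<phi> V1 = V2)"

definition union_of_double_cosets :: "('a, 'b) monoid_scheme \<Rightarrow> 'a set \<Rightarrow> 'a set \<Rightarrow> bool" where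
  "union_of_double_cosets G H A \<longleftrightarrow> A \<subseteq> carrier G \<and>
     (\<forall>a\<in>A. \<forall>h1\<in>H. \<forall>h2\<in>H. monoid.mult G (monoid.mult G h1 a) h2 \<in> A)"

end

theory Submission
  imports Defs
begin

inductive_set mgen :: "('a, 'b) monoid_scheme \<Rightarrow> 'a set \<Rightarrow> 'a set" for G B where
  mone: "\<one>\<^bsub>G\<^esub> \<in> mgen G B"
| mstep: "b \<in> B \<Longrightarrow> x \<in> mgen G B \<Longrightarrow> b \<otimes>\<^bsub>G\<^esub> x \<in> mgen G B"

context group
begin

lemma mgen_carrier: assumes "B \<subseteq> carrier G" "x \<in> mgen G B" shows "x \<in> carrier G"
  using assms(2) by (induction x rule: mgen.induct) (use assms in auto)

lemma mgen_mult: assumes "B \<subseteq> carrier G" "x \<in> mgen G B" "y \<in> mgen G B" shows "x \<otimes> y \<in> mgen G B"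
  using assms(2)
proof (induction x rule: mgen.induct)
  case mone then show ?case using mgen_carrier assms by auto
next
  case (mstep b x)
  then have "b \<otimes> (x \<otimes> y) \<in> mgen G B" by (auto intro: mgen.mstep)
  then show ?case using mstep mgen_carrier assms by (simp add: m_assoc subsetD)
qed

lemma mgen_pow: "B \<subseteq> carrier G \<Longrightarrow> b \<in> B \<Longrightarrow> b [^] (n::nat) \<in> mgen G B"
proof (induction n)
  case 0 then show ?case by (simp add: mgen.mone)
next
  case (Suc n)
  have "b [^] Suc n = b \<otimes> b [^] n" using Suc.prems by (metis nat_pow_Suc2 subsetD)
  then show ?case using Suc by (auto intro: mgen.mstep)
qed

lemma mgen_inv: "finite (carrier G) \<Longrightarrow> B \<subseteq> carrier G \<Longrightarrow> b \<in> B \<Longrightarrow> inv b \<in> mgen G B"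
proof -
  assume f: "finite (carrier G)" and sub: "B \<subseteq> carrier G" and b: "b \<in> B"
  have bc: "b \<in> carrier G" using sub b by auto
  have ne: "carrier G \<noteq> {}" using one_closed by blast
  have "card (carrier G) > 0" using f ne by (simp add: card_gt_0_iff)
  then have o: "Suc (order G - 1) = order G" unfolding order_def by simp
  have "b [^] (order G - 1) \<otimes> b = b [^] Suc (order G - 1)"
    by (simp only: nat_pow_Suc)
  then have "b [^] (order G - 1) \<otimes> b = b [^] order G" by (simp only: o)
  also have "\<dots> = \<one>" using bc by (rule pow_order_eq_1)
  finally have "inv b = b [^] (order G - 1)"
    using bc nat_pow_closed inv_equality by blast
  then show ?thesis using mgen_pow[OF sub b] by simp
qed

lemma generate_eq_mgen: "finite (carrier G) \<Longrightarrow> B \<subseteq> carrier G \<Longrightarrow> generate G B = mgen G B"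
proof
  assume f: "finite (carrier G)" and sub: "B \<subseteq> carrier G"
  show "generate G B \<subseteq> mgen G B"
  proof
    fix x assume "x \<in> generate G B"
    then show "x \<in> mgen G B"
    proof (induction x rule: generate.induct)
      case one then show ?case by (rule mgen.mone)
    next
      case (incl h) then show ?case using mgen.mstep[where b=h and x="\<one>", OF incl mgen.mone] sub by (metis r_one subsetD)
    next
      case (inv h) then show ?case using mgen_inv f sub by auto
    next
      case (eng h1 h2) then show ?case using mgen_mult sub by auto
    qed
  qed
next
  assume sub: "B \<subseteq> carrier G"
  show "mgen G B \<subseteq> generate G B"
  proof
    fix x assume "x \<in> mgen G B"
    then show "x \<in> generate G B"
      by (induction x rule: mgen.induct) (auto intro: generate.intros)
  qed
qed

lemma rc_sub: assumes "subgroup H G" "V \<in> RCOSETS G H" shows "V \<subseteq> carrier G"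
proof -
  obtain a where "a \<in> carrier G" "V = H #> a" using assms(2) unfolding RCOSETS_def by auto
  then show ?thesis using r_coset_subset_G subgroup.subset[OF assms(1)] by simp
qed

lemma adj_shift:
  assumes "subgroup H G" "cos_adj G H A V1 V2" "g \<in> carrier G"
  shows "cos_adj G H A (V1 #> g) (V2 #> g)"
proof -
  obtain x y where xy: "x \<in> carrier G" "y \<in> carrier G" "V1 = H #> x" "V2 = H #> y" "y \<otimes> inv x \<in> A"
    using assms(2) unfolding cos_adj_def by blast
  have Hs: "H \<subseteq> carrier G" using assms(1) subgroup.subset by blast
  have "(y \<otimes> g) \<otimes> inv (x \<otimes> g) = y \<otimes> inv x"
  proof -
    have "g \<otimes> (inv g \<otimes> inv x) = inv x" using xy assms(3) by (metis inv_closed m_assoc r_inv l_one)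
    then show ?thesis using xy assms(3) by (simp add: inv_mult_group m_assoc)
  qed
  moreover have "V1 #> g = H #> (x \<otimes> g)" "V2 #> g = H #> (y \<otimes> g)"
    using xy assms(3) Hs by (simp_all add: coset_mult_assoc)
  ultimately show ?thesis unfolding cos_adj_def using xy assms(3)
    by (metis m_closed)
qed

lemma shift_aut:
  assumes "subgroup H G" "g \<in> carrier G"
  shows "(\<lambda>V. V #> g) \<in> cos_aut G H A"
proof -
  have Hs: "H \<subseteq> carrier G" using assms(1) subgroup.subset by blast
  have mem: "V #> k \<in> RCOSETS G H" if "V \<in> RCOSETS G H" "k \<in> carrier G" for V k
    using that Hs unfolding RCOSETS_def by (auto simp add: coset_mult_assoc)
  have bk: "V #> k #> inv k = V" if "V \<in> RCOSETS G H" "k \<in> carrier G" for V k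
  proof -
    have "V \<subseteq> carrier G" using that rc_sub assms(1) by blast
    then show ?thesis using that by (simp add: coset_mult_assoc)
  qed
  have bk2: "V #> inv k #> k = V" if "V \<in> RCOSETS G H" "k \<in> carrier G" for V k
    using bk[of V "inv k"] that by simp
  have bij: "bij_betw (\<lambda>V. V #> g) (RCOSETS G H) (RCOSETS G H)"
    apply (rule bij_betw_byWitness[where f'="\<lambda>V. V #> inv g"])
    using bk bk2 mem assms(2) by auto
  have adj: "cos_adj G H A V1 V2 \<longleftrightarrow> cos_adj G H A (V1 #> g) (V2 #> g)"
    if "V1 \<in> RCOSETS G H" "V2 \<in> RCOSETS G H" for V1 V2
    using adj_shift[OF assms(1) _ assms(2)] adj_shift[OF assms(1), of A "V1 #> g" "V2 #> g" "inv g"]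
      bk that assms(2) by auto
  show ?thesis unfolding cos_aut_def using bij adj by auto
qed

lemma comp_aut:
  assumes "f \<in> cos_aut G H A" "g \<in> cos_aut G H A"
  shows "f \<circ> g \<in> cos_aut G H A"
proof -
  have bf: "bij_betw f (RCOSETS G H) (RCOSETS G H)" and bg: "bij_betw g (RCOSETS G H) (RCOSETS G H)"
    using assms unfolding cos_aut_def by auto
  have af: "\<And>V1 V2. V1\<in>RCOSETS G H \<Longrightarrow> V2\<in>RCOSETS G H \<Longrightarrow> cos_adj G H A V1 V2 \<longleftrightarrow> cos_adj G H A (f V1) (f V2)"
    using assms(1) unfolding cos_aut_def by blast
  have ag: "\<And>V1 V2. V1\<in>RCOSETS G H \<Longrightarrow> V2\<in>RCOSETS G H \<Longrightarrow> cos_adj G H A V1 V2 \<longleftrightarrow> cos_adj G H A (g V1) (g V2)"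
    using assms(2) unfolding cos_aut_def by blast
  have gm: "\<And>V. V \<in> RCOSETS G H \<Longrightarrow> g V \<in> RCOSETS G H"
    using bg unfolding bij_betw_def by blast
  have "bij_betw (f \<circ> g) (RCOSETS G H) (RCOSETS G H)"
    using bf bg by (rule bij_betw_trans[rotated])
  moreover have "\<forall>V1\<in>RCOSETS G H. \<forall>V2\<in>RCOSETS G H. cos_adj G H A V1 V2 \<longleftrightarrow> cos_adj G H A ((f \<circ> g) V1) ((f \<circ> g) V2)"
  proof (intro ballI)
    fix V1 V2 assume v: "V1 \<in> RCOSETS G H" "V2 \<in> RCOSETS G H"
    show "cos_adj G H A V1 V2 \<longleftrightarrow> cos_adj G H A ((f \<circ> g) V1) ((f \<circ> g) V2)"
      using ag[OF v] af[OF gm[OF v(1)] gm[OF v(2)]] by simp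
  qed
  ultimately show ?thesis unfolding cos_aut_def by blast
qed

end

theorem lemma3p4:
  fixes G (structure) and H A B :: "'a set"
  assumes "group G" and "finite (carrier G)"
    and "subgroup H G"
    and "union_of_double_cosets G H A"
    and "(\<lambda>a. inv a) ` A = A"
    and "cos_vertex_transitive G H A"
    and "B \<subseteq> A"
    and "\<forall>\<phi>\<in>cos_aut_stab G H A. \<phi> ` {H #> x | x. x \<in> B} = {H #> x | x. x \<in> B}"
  shows "\<forall>\<phi>\<in>cos_aut_stab G H A.
           \<phi> ` {H #> x | x. x \<in> generate G B} = {H #> x | x. x \<in> generate G B}"
proof
  interpret group G by (rule assms(1))
  fix \<phi> assume phi: "\<phi> \<in> cos_aut_stab G H A"
  have Bs: "B \<subseteq> carrier G" using assms(4,7) unfolding union_of_double_cosets_def by auto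
  have Hs: "H \<subseteq> carrier G" using assms(3) subgroup.subset by blast
  let ?C = "{H #> x | x. x \<in> mgen G B}"
  have key: "\<forall>\<phi>\<in>cos_aut_stab G H A. \<phi> (H #> x) \<in> ?C" if "x \<in> mgen G B" for x
    using that
  proof (induction x rule: mgen.induct)
    case mone
    show ?case
    proof
      fix \<phi> assume "\<phi> \<in> cos_aut_stab G H A"
      then have "\<phi> (H #> \<one>) = H #> \<one> \<and> \<one> \<in> mgen G B"
        using Hs mgen.mone unfolding cos_aut_stab_def by simp
      then show "\<phi> (H #> \<one>) \<in> ?C" by blast
    qed
  next
    case (mstep b x)
    show ?case
    proof
      fix \<phi> assume phi: "\<phi> \<in> cos_aut_stab G H A"
      obtain y where y: "y \<in> mgen G B" "\<phi> (H #> x) = H #> y" using mstep.IH phi by auto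
      have xc: "x \<in> carrier G" and yc: "y \<in> carrier G" and bc: "b \<in> carrier G"
        using mgen_carrier[OF Bs] y mstep Bs by auto
      define \<psi> where "\<psi> = (\<lambda>V. V #> inv y) \<circ> \<phi> \<circ> (\<lambda>V. V #> x)"
      have phiaut: "\<phi> \<in> cos_aut G H A" using phi unfolding cos_aut_stab_def by auto
      have psiaut: "\<psi> \<in> cos_aut G H A" unfolding \<psi>_def
        by (intro comp_aut shift_aut assms(3) phiaut xc inv_closed yc)
      have "\<psi> H = H" unfolding \<psi>_def using y Hs yc xc by (simp add: coset_mult_assoc)
      then have psis: "\<psi> \<in> cos_aut_stab G H A" using psiaut unfolding cos_aut_stab_def by auto
      have "\<psi> (H #> b) \<in> \<psi> ` {H #> x | x. x \<in> B}" using mstep.hyps(1) by auto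
      then obtain b' where b': "b' \<in> B" "\<psi> (H #> b) = H #> b'" using assms(8) psis by auto
      have bxR: "H #> (b \<otimes> x) \<in> RCOSETS G H" using bc xc Hs by (simp add: rcosetsI)
      have bphi: "bij_betw \<phi> (RCOSETS G H) (RCOSETS G H)" using phiaut unfolding cos_aut_def by blast
      have "\<phi> (H #> (b \<otimes> x)) \<in> RCOSETS G H"
        using bij_betwE[OF bphi] bxR by blast
      then have sub: "\<phi> (H #> (b \<otimes> x)) \<subseteq> carrier G"
        using rc_sub assms(3) by blast
      have "\<psi> (H #> b) = \<phi> (H #> (b \<otimes> x)) #> inv y"
        unfolding \<psi>_def using Hs bc xc by (simp add: coset_mult_assoc)
      then have "\<phi> (H #> (b \<otimes> x)) = H #> b' #> y"
        using b' sub yc by (simp add: coset_mult_assoc)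
      also have "\<dots> = H #> (b' \<otimes> y)" using Hs b' Bs yc by (simp add: coset_mult_assoc subsetD)
      finally show "\<phi> (H #> (b \<otimes> x)) \<in> ?C" using mgen.mstep[OF b'(1) y(1)] by blast
    qed
  qed
  have gen: "generate G B = mgen G B" by (rule generate_eq_mgen[OF assms(2) Bs])
  have phiaut: "\<phi> \<in> cos_aut G H A" using phi unfolding cos_aut_stab_def by auto
  have CR: "?C \<subseteq> RCOSETS G H" using mgen_carrier[OF Bs] Hs rcosetsI by blast
  have sub: "\<phi> ` ?C \<subseteq> ?C" using key phi by auto
  have bphi: "bij_betw \<phi> (RCOSETS G H) (RCOSETS G H)" using phiaut unfolding cos_aut_def by blast
  have inj: "inj_on \<phi> ?C" using bij_betw_imp_inj_on[OF bphi] CR inj_on_subset by blast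
  have "finite (RCOSETS G H)" unfolding RCOSETS_def using assms(2) by blast
  then have fin: "finite ?C" using CR finite_subset by blast
  have "\<phi> ` ?C = ?C" using sub inj fin by (simp add: card_image card_subset_eq)
  then show "\<phi> ` {H #> x | x. x \<in> generate G B} = {H #> x | x. x \<in> generate G B}"
    using gen by simp
qed

end
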